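(* Let $\gamma(s)$ be a non-geodesic arc-length parametrized curve immersed in a BCV space $M(a,b)$ with $4a\neq b^2$, with Frenet frame $\{T,N,B\}$. Then $T_3=\langle T,E_3\rangle$ is constant if and only if $N_3=\langle N,E_3\rangle=0$.
   Context: For real $a,b$, the BCV space $M(a,b)$ is $\{(x,y,z)\in\mathbb{R}^3:\lambda_a=1+a(x^2+y^2)>0\}$ with the metric $$g_{a,b}=\frac{dx^2+dy^2}{[1+a(x^2+y^2)]^2}+\left(dz+\frac{b}{2}\,\frac{y\,dx-x\,dy}{1+a(x^2+y^2)}\right)^2,$$ and $E_3=\partial_z$. The Frenet frame of a curve with nowhere vanishing curvature $\kappa=\lVert\nabla_TT\rVert$ is given by $\nabla_TT=\kappa N$, $\nabla_TN=-\kappa T+\tau B$, $\nabla_TB=-\tau N$, where $\nabla$ is the Levi-Civita connection. *)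

theory Defs
  imports "HOL-Analysis.Analysis"
begin

definition bcv_lambda :: "real \<Rightarrow> real^3 \<Rightarrow> real" where
  "bcv_lambda a p = 1 + a * ((p$1)^2 + (p$2)^2)"

definition BCV_space :: "real \<Rightarrow> real \<Rightarrow> (real^3) set" where
  "BCV_space a b = {p. bcv_lambda a p > 0}"

definition bcv_omega :: "real \<Rightarrow> real \<Rightarrow> real^3 \<Rightarrow> real^3 \<Rightarrow> real" where
  "bcv_omega a b p u = u$3 + (b/2) * (p$2 * u$1 - p$1 * u$2) / bcv_lambda a p"

definition bcv_metric :: "real \<Rightarrow> real \<Rightarrow> real^3 \<Rightarrow> real^3 \<Rightarrow> real^3 \<Rightarrow> real" where
  "bcv_metric a b p u v =
     (u$1 * v$1 + u$2 * v$2) / (bcv_lambda a p)^2 + bcv_omega a b p u * bcv_omega a b p v"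

definition coord_vec :: "3 \<Rightarrow> real^3" where
  "coord_vec i = axis i 1"

definition E3 :: "real^3" where
  "E3 = axis 3 1"

definition bcv_gcomp :: "real \<Rightarrow> real \<Rightarrow> real^3 \<Rightarrow> real^3^3" where
  "bcv_gcomp a b p = (\<chi> i j. bcv_metric a b p (coord_vec i) (coord_vec j))"

definition bcv_ginv :: "real \<Rightarrow> real \<Rightarrow> real^3 \<Rightarrow> real^3^3" where
  "bcv_ginv a b p = matrix_inv (bcv_gcomp a b p)"

definition partial :: "3 \<Rightarrow> (real^3 \<Rightarrow> real) \<Rightarrow> real^3 \<Rightarrow> real" where
  "partial l f p = deriv (\<lambda>t. f (p + t *\<^sub>R coord_vec l)) 0"

definition bcv_christoffel :: "real \<Rightarrow> real \<Rightarrow> real^3 \<Rightarrow> 3 \<Rightarrow> 3 \<Rightarrow> 3 \<Rightarrow> real" where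
  "bcv_christoffel a b p k i j =
     (1/2) * (\<Sum>l\<in>UNIV. bcv_ginv a b p $ k $ l *
        (partial i (\<lambda>q. bcv_gcomp a b q $ j $ l) p
         + partial j (\<lambda>q. bcv_gcomp a b q $ i $ l) p
         - partial l (\<lambda>q. bcv_gcomp a b q $ i $ j) p))"

definition bcv_cov :: "real \<Rightarrow> real \<Rightarrow> (real \<Rightarrow> real^3) \<Rightarrow> (real \<Rightarrow> real^3) \<Rightarrow> real \<Rightarrow> real^3" where
  "bcv_cov a b \<gamma> V s =
     vector_derivative V (at s)
     + (\<chi> k. \<Sum>i\<in>UNIV. \<Sum>j\<in>UNIV. bcv_christoffel a b (\<gamma> s) k i j
             * (vector_derivative \<gamma> (at s)) $ i * V s $ j)"

end

theory Submission
  imports Defs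
begin

abbreviation "L a p \<equiv> bcv_lambda a p"

lemma ginv_right:
  assumes Lnz: "bcv_lambda a p \<noteq> 0"
  shows "bcv_gcomp a b p ** bcv_ginv a b p = mat 1"
proof -
  let ?G = "bcv_gcomp a b p"
  have ker: "\<forall>x. ?G *v x = 0 \<longrightarrow> x = 0"
  proof (intro allI impI)
    fix x :: "real^3" assume h: "?G *v x = 0"
    have c: "(?G *v x) $ k = 0" for k using h by simp
    let ?w = "bcv_omega a b p x"
    have r3: "(?G *v x) $ 3 = ?w"
      using Lnz by (simp add: matrix_vector_mult_def sum_3 bcv_gcomp_def bcv_metric_def
          bcv_omega_def coord_vec_def axis_def field_simps)
    have w0: "?w = 0" using c[of 3] r3 by simp
    have r1: "(?G *v x) $ 1 = x$1 / (bcv_lambda a p)^2 + (b/2 * p$2 / bcv_lambda a p) * ?w"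
      using Lnz by (simp add: matrix_vector_mult_def sum_3 bcv_gcomp_def bcv_metric_def
          bcv_omega_def coord_vec_def axis_def field_simps)
    have r2: "(?G *v x) $ 2 = x$2 / (bcv_lambda a p)^2 - (b/2 * p$1 / bcv_lambda a p) * ?w"
      using Lnz by (simp add: matrix_vector_mult_def sum_3 bcv_gcomp_def bcv_metric_def
          bcv_omega_def coord_vec_def axis_def field_simps)
    have x1: "x$1 = 0" using c[of 1] r1 w0 Lnz by simp
    have x2: "x$2 = 0" using c[of 2] r2 w0 Lnz by simp
    have x3: "x$3 = 0" using w0 x1 x2 by (simp add: bcv_omega_def)
    show "x = 0" using x1 x2 x3 by (simp add: vec_eq_iff forall_3)
  qed
  have "invertible ?G"
    using ker matrix_left_invertible_ker invertible_left_inverse by blast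
  then have "\<exists>A'. ?G ** A' = mat 1 \<and> A' ** ?G = mat 1" unfolding invertible_def .
  then have "?G ** matrix_inv ?G = mat 1 \<and> matrix_inv ?G ** ?G = mat 1"
    unfolding matrix_inv_def by (rule someI_ex)
  then show ?thesis unfolding bcv_ginv_def by simp
qed

lemma part3: "partial 3 (\<lambda>q. bcv_gcomp a b q $ i $ j) p = 0"
proof -
  have "(\<lambda>t. bcv_gcomp a b (p + t *\<^sub>R coord_vec 3) $ i $ j) = (\<lambda>t. bcv_gcomp a b p $ i $ j)"
    by (simp add: bcv_gcomp_def bcv_metric_def bcv_omega_def bcv_lambda_def coord_vec_def axis_def)
  then show ?thesis unfolding partial_def by simp
qed

lemma deriv_eq: "(f has_real_derivative X) F \<Longrightarrow> X = Y \<Longrightarrow> (f has_real_derivative Y) F"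
  by simp

lemma quot:
  fixes f g :: "real \<Rightarrow> real"
  assumes "(f has_real_derivative f') (at x)" "(g has_real_derivative g') (at x)" "g x \<noteq> 0"
  shows "((\<lambda>t. c * f t / g t) has_real_derivative c*(f' * g x - f x * g')/(g x)^2) (at x)"
  using assms by (auto intro!: derivative_eq_intros simp: field_simps power2_eq_square)

lemma hLam0: "((\<lambda>t. bcv_lambda a (p + t *\<^sub>R u)) has_real_derivative a*(2*p$1*u$1 + 2*p$2*u$2)) (at 0)"
  unfolding bcv_lambda_def by (auto intro!: derivative_eq_intros simp: algebra_simps)

lemma d1:
  assumes Lnz: "bcv_lambda a p \<noteq> 0"
  shows "((\<lambda>t. bcv_gcomp a b (p + t *\<^sub>R u) $ 1 $ 3) has_real_derivative
     b/2*(u$2 * bcv_lambda a p - p$2*(2*a*(p$1*u$1 + p$2*u$2)))/(bcv_lambda a p)^2) (at 0)"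
proof -
  have e: "(\<lambda>t. bcv_gcomp a b (p + t *\<^sub>R u) $ 1 $ 3) =
     (\<lambda>t. b/2*(p$2 + t*u$2)/bcv_lambda a (p + t *\<^sub>R u))"
    by (simp add: bcv_gcomp_def bcv_metric_def bcv_omega_def coord_vec_def axis_def fun_eq_iff)
  have hY: "((\<lambda>t. p$2 + t*u$2) has_real_derivative u$2) (at 0)"
    by (auto intro!: derivative_eq_intros)
  have nz: "bcv_lambda a (p + 0 *\<^sub>R u) \<noteq> 0" using Lnz by simp
  show ?thesis unfolding e
    apply (rule deriv_eq[OF quot[OF hY hLam0 nz]])
    using Lnz by (simp add: field_simps)
qed

lemma d2:
  assumes Lnz: "bcv_lambda a p \<noteq> 0"
  shows "((\<lambda>t. bcv_gcomp a b (p + t *\<^sub>R u) $ 2 $ 3) has_real_derivative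
     -(b/2)*(u$1 * bcv_lambda a p - p$1*(2*a*(p$1*u$1 + p$2*u$2)))/(bcv_lambda a p)^2) (at 0)"
proof -
  have e: "(\<lambda>t. bcv_gcomp a b (p + t *\<^sub>R u) $ 2 $ 3) =
     (\<lambda>t. b/2*(-(p$1) - t*u$1)/bcv_lambda a (p + t *\<^sub>R u))"
    by (simp add: bcv_gcomp_def bcv_metric_def bcv_omega_def coord_vec_def axis_def fun_eq_iff)
  have hY: "((\<lambda>t. -(p$1) - t*u$1) has_real_derivative -(u$1)) (at 0)"
    by (auto intro!: derivative_eq_intros)
  have nz: "bcv_lambda a (p + 0 *\<^sub>R u) \<noteq> 0" using Lnz by simp
  show ?thesis unfolding e
    apply (rule deriv_eq[OF quot[OF hY hLam0 nz]])
    using Lnz by (simp add: field_simps)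
qed

lemma g33': "bcv_gcomp a b q $ 3 $ 3 = 1"
  by (simp add: bcv_gcomp_def bcv_metric_def bcv_omega_def coord_vec_def axis_def)

lemma part_th:
  assumes Lnz: "bcv_lambda a p \<noteq> 0"
  shows "partial i (\<lambda>q. bcv_gcomp a b q $ j $ 3) p =
    (if j = 1 then b/2*((axis i 1::real^3)$2 * bcv_lambda a p - p$2*(2*a*(p$1*(axis i 1::real^3)$1 + p$2*(axis i 1::real^3)$2)))/(bcv_lambda a p)^2
     else if j = 2 then -(b/2)*((axis i 1::real^3)$1 * bcv_lambda a p - p$1*(2*a*(p$1*(axis i 1::real^3)$1 + p$2*(axis i 1::real^3)$2)))/(bcv_lambda a p)^2
     else 0)"
proof -
  consider "j = 1" | "j = 2" | "j = 3" using exhaust_3 by blast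
  then show ?thesis
  proof cases
  case 1
  then show ?thesis unfolding partial_def coord_vec_def
    using DERIV_imp_deriv[OF d1[OF Lnz, of b "axis i 1"]] by simp
next
  case 2
  then show ?thesis unfolding partial_def coord_vec_def
    using DERIV_imp_deriv[OF d2[OF Lnz, of b "axis i 1"]] by simp
next
  case 3
  then show ?thesis unfolding partial_def by (simp add: g33')
  qed
qed

lemma contr:
  fixes g :: "3 \<Rightarrow> real" and h :: "3 \<Rightarrow> 3 \<Rightarrow> real" and A :: "3 \<Rightarrow> real"
  shows "(\<Sum>k\<in>UNIV. g k * (1/2 * (\<Sum>l\<in>UNIV. h k l * A l))) = 1/2 * (\<Sum>l\<in>UNIV. (\<Sum>k\<in>UNIV. g k * h k l) * A l)"
  unfolding sum_3 by (simp add: algebra_simps)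

lemma swap3:
  fixes g :: "3 \<Rightarrow> real" and G :: "3 \<Rightarrow> 3 \<Rightarrow> 3 \<Rightarrow> real" and v :: "3 \<Rightarrow> real"
  shows "(\<Sum>k\<in>UNIV. g k * (\<Sum>i\<in>UNIV. \<Sum>j\<in>UNIV. G k i j * v i * v j)) =
    (\<Sum>i\<in>UNIV. \<Sum>j\<in>UNIV. (\<Sum>k\<in>UNIV. g k * G k i j) * v i * v j)"
  unfolding sum_3 by (simp add: algebra_simps)

lemma omega_row:
  assumes Lnz: "bcv_lambda a p \<noteq> 0"
  shows "bcv_omega a b p w = (\<Sum>k\<in>UNIV. bcv_gcomp a b p $ 3 $ k * w $ k)"
  using Lnz by (simp add: sum_3 bcv_gcomp_def bcv_metric_def bcv_omega_def coord_vec_def axis_def field_simps)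

lemma S_ij:
  assumes Lnz: "bcv_lambda a p \<noteq> 0"
  shows "(\<Sum>k\<in>UNIV. bcv_gcomp a b p $ 3 $ k * bcv_christoffel a b p k i j) =
    1/2 * (partial i (\<lambda>q. bcv_gcomp a b q $ j $ 3) p + partial j (\<lambda>q. bcv_gcomp a b q $ i $ 3) p
           - partial 3 (\<lambda>q. bcv_gcomp a b q $ i $ j) p)"
proof -
  define A where "A l = partial i (\<lambda>q. bcv_gcomp a b q $ j $ l) p + partial j (\<lambda>q. bcv_gcomp a b q $ i $ l) p
           - partial l (\<lambda>q. bcv_gcomp a b q $ i $ j) p" for l
  have M: "(\<Sum>k\<in>UNIV. bcv_gcomp a b p $ 3 $ k * bcv_ginv a b p $ k $ l) = (if 3 = l then 1 else 0)" for l
  proof -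
    have "(bcv_gcomp a b p ** bcv_ginv a b p) $ 3 $ l = mat 1 $ 3 $ l" using ginv_right[OF Lnz] by simp
    then show ?thesis by (simp add: matrix_matrix_mult_def mat_def)
  qed
  have "(\<Sum>k\<in>UNIV. bcv_gcomp a b p $ 3 $ k * bcv_christoffel a b p k i j) =
      (\<Sum>k\<in>UNIV. bcv_gcomp a b p $ 3 $ k * (1/2 * (\<Sum>l\<in>UNIV. bcv_ginv a b p $ k $ l * A l)))"
    by (simp add: bcv_christoffel_def A_def)
  also have "\<dots> = 1/2 * (\<Sum>l\<in>UNIV. (\<Sum>k\<in>UNIV. bcv_gcomp a b p $ 3 $ k * bcv_ginv a b p $ k $ l) * A l)"
    by (rule contr)
  also have "\<dots> = 1/2 * A 3" by (simp add: M sum_3)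
  finally show ?thesis by (simp add: A_def)
qed

lemma omega_C:
  assumes Lnz: "bcv_lambda a p \<noteq> 0"
  shows "bcv_omega a b p (\<chi> k. \<Sum>i\<in>UNIV. \<Sum>j\<in>UNIV. bcv_christoffel a b p k i j * v $ i * v $ j)
    = a*b*(-(p$1*p$2*(v$1)^2) + ((p$1)^2 - (p$2)^2)* v$1 * v$2 + p$1*p$2*(v$2)^2)/(bcv_lambda a p)^2"
proof -
  have "bcv_omega a b p (\<chi> k. \<Sum>i\<in>UNIV. \<Sum>j\<in>UNIV. bcv_christoffel a b p k i j * v $ i * v $ j)
     = (\<Sum>k\<in>UNIV. bcv_gcomp a b p $ 3 $ k * (\<Sum>i\<in>UNIV. \<Sum>j\<in>UNIV. bcv_christoffel a b p k i j * v $ i * v $ j))"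
    by (simp add: omega_row[OF Lnz])
  also have "\<dots> = (\<Sum>i\<in>UNIV. \<Sum>j\<in>UNIV. (\<Sum>k\<in>UNIV. bcv_gcomp a b p $ 3 $ k * bcv_christoffel a b p k i j) * v $ i * v $ j)"
    by (rule swap3)
  also have "\<dots> = a*b*(-(p$1*p$2*(v$1)^2) + ((p$1)^2 - (p$2)^2)* v$1 * v$2 + p$1*p$2*(v$2)^2)/(bcv_lambda a p)^2"
    unfolding S_ij[OF Lnz] part_th[OF Lnz] part3 sum_3
    using Lnz by (simp add: axis_def field_simps power2_eq_square)
  finally show ?thesis .
qed


lemma vd_comp:
  assumes "(g has_vector_derivative v) F"
  shows "((\<lambda>s. g s $ i) has_real_derivative v $ i) F"
proof -
  have e: "(\<lambda>h. (h *\<^sub>R v) $ i) = (*) (v $ i)" by (auto simp: fun_eq_iff)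
  show ?thesis using bounded_linear.has_derivative[OF bounded_linear_vec_nth, of g "\<lambda>h. h *\<^sub>R v" F i] assms
    unfolding has_vector_derivative_def has_field_derivative_def e by simp
qed

lemma omega_deriv:
  fixes x y t1 t2 t3 Lam :: "real \<Rightarrow> real"
  assumes "(x has_real_derivative x') (at s)" "(y has_real_derivative y') (at s)"
    "(t1 has_real_derivative t1') (at s)" "(t2 has_real_derivative t2') (at s)"
    "(t3 has_real_derivative t3') (at s)" "(Lam has_real_derivative Lam') (at s)"
    and nz: "Lam s \<noteq> 0"
  shows "((\<lambda>s. t3 s + b/2*(y s * t1 s - x s * t2 s)/Lam s) has_real_derivative
     (t3' + b/2*((y' * t1 s + y s * t1' - x' * t2 s - x s * t2') * Lam s
        - (y s * t1 s - x s * t2 s)*Lam')/(Lam s)^2)) (at s)"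
  using nz by (auto intro!: derivative_eq_intros assms simp: field_simps power2_eq_square)

lemma lam_deriv:
  fixes x y :: "real \<Rightarrow> real"
  assumes "(x has_real_derivative x') (at s)" "(y has_real_derivative y') (at s)"
  shows "((\<lambda>s. 1 + a*((x s)^2 + (y s)^2)) has_real_derivative a*(2*x s*x' + 2*y s*y')) (at s)"
  by (auto intro!: derivative_eq_intros assms simp: algebra_simps)

lemma metric_E3: "bcv_metric a b p u E3 = bcv_omega a b p u"
  by (simp add: bcv_metric_def bcv_omega_def E3_def axis_def)

lemma omega_scale:
  assumes "bcv_lambda a p \<noteq> 0"
  shows "c * bcv_omega a b p u = bcv_omega a b p (c *\<^sub>R u)"
  using assms by (simp add: bcv_omega_def field_simps)

lemma omega_add:
  assumes "bcv_lambda a p \<noteq> 0"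
  shows "bcv_omega a b p (u + w) = bcv_omega a b p u + bcv_omega a b p w"
  using assms by (simp add: bcv_omega_def field_simps)

lemma final_alg:
  fixes L a b x y u v w' u' v' :: real
  assumes "L \<noteq> 0"
  shows "w' + b/2*((v * u + y * u' - u * v - x * v') * L - (y * u - x * v)*(a*(2*x*u + 2*y* v)))/L^2
   = (w' + b/2*(y * u' - x * v')/L) + a*b*(-(x*y*u^2) + (x^2 - y^2)* u * v + x*y* v^2)/L^2"
proof -
  have "w' + b/2*((v * u + y * u' - u * v - x * v') * L - (y * u - x * v)*(a*(2*x*u + 2*y* v)))/L^2
     = w' + b/2*(y * u' - x * v')*L/L^2 - b*(y * u - x * v)*(a*(x*u + y* v))/L^2"
    using assms by (simp add: field_simps)
  also have "b/2*(y * u' - x * v')*L/L^2 = b/2*(y * u' - x * v')/L"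
    using assms by (simp add: power2_eq_square)
  also have "b*(y * u - x * v)*(a*(x*u + y* v)) = - (a*b*(-(x*y*u^2) + (x^2 - y^2)* u * v + x*y* v^2))"
    by (simp add: algebra_simps power2_eq_square)
  finally show ?thesis by simp
qed

theorem lemma4p7:
  fixes a b :: real
    and I :: "real set"
    and \<gamma> T N B :: "real \<Rightarrow> real^3"
    and \<kappa> \<tau> :: "real \<Rightarrow> real"
  assumes ab: "4 * a \<noteq> b^2"
    and I: "open I" "is_interval I" "I \<noteq> {}"
    and in_M: "\<And>s. s \<in> I \<Longrightarrow> \<gamma> s \<in> BCV_space a b"
    and diff: "\<And>s. s \<in> I \<Longrightarrow> \<gamma> differentiable (at s)"
              "\<And>s. s \<in> I \<Longrightarrow> T differentiable (at s)"
              "\<And>s. s \<in> I \<Longrightarrow> N differentiable (at s)"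
              "\<And>s. s \<in> I \<Longrightarrow> B differentiable (at s)"
    and T_def: "\<And>s. s \<in> I \<Longrightarrow> T s = vector_derivative \<gamma> (at s)"
    and arclen: "\<And>s. s \<in> I \<Longrightarrow> bcv_metric a b (\<gamma> s) (T s) (T s) = 1"
    and orthonormal:
      "\<And>s. s \<in> I \<Longrightarrow> bcv_metric a b (\<gamma> s) (N s) (N s) = 1"
      "\<And>s. s \<in> I \<Longrightarrow> bcv_metric a b (\<gamma> s) (B s) (B s) = 1"
      "\<And>s. s \<in> I \<Longrightarrow> bcv_metric a b (\<gamma> s) (T s) (N s) = 0"
      "\<And>s. s \<in> I \<Longrightarrow> bcv_metric a b (\<gamma> s) (T s) (B s) = 0"
      "\<And>s. s \<in> I \<Longrightarrow> bcv_metric a b (\<gamma> s) (N s) (B s) = 0"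
    and curv: "\<And>s. s \<in> I \<Longrightarrow>
       \<kappa> s = sqrt (bcv_metric a b (\<gamma> s) (bcv_cov a b \<gamma> T s) (bcv_cov a b \<gamma> T s))"
    and nongeod: "\<And>s. s \<in> I \<Longrightarrow> \<kappa> s \<noteq> 0"
    and frenet1: "\<And>s. s \<in> I \<Longrightarrow> bcv_cov a b \<gamma> T s = \<kappa> s *\<^sub>R N s"
    and frenet2: "\<And>s. s \<in> I \<Longrightarrow> bcv_cov a b \<gamma> N s = - \<kappa> s *\<^sub>R T s + \<tau> s *\<^sub>R B s"
    and frenet3: "\<And>s. s \<in> I \<Longrightarrow> bcv_cov a b \<gamma> B s = - \<tau> s *\<^sub>R N s"
  shows "(\<exists>c. \<forall>s\<in>I. bcv_metric a b (\<gamma> s) (T s) E3 = c)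
     \<longleftrightarrow> (\<forall>s\<in>I. bcv_metric a b (\<gamma> s) (N s) E3 = 0)"
proof -
  have fder: "((\<lambda>s. bcv_metric a b (\<gamma> s) (T s) E3) has_real_derivative
      \<kappa> s * bcv_metric a b (\<gamma> s) (N s) E3) (at s)" if s: "s \<in> I" for s
  proof -
    define T' where "T' = vector_derivative T (at s)"
    have Lnz: "bcv_lambda a (\<gamma> s) \<noteq> 0" using in_M[OF s] by (simp add: BCV_space_def)
    have Lnz': "1 + a*((\<gamma> s $ 1)^2 + (\<gamma> s $ 2)^2) \<noteq> 0" using Lnz by (simp add: bcv_lambda_def)
    have hg: "(\<gamma> has_vector_derivative T s) (at s)"
      using vector_derivative_works[THEN iffD1, OF diff(1)[OF s]] T_def[OF s] by simp
    have hT: "(T has_vector_derivative T') (at s)"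
      using vector_derivative_works[THEN iffD1, OF diff(2)[OF s]] unfolding T'_def .
    have cg: "((\<lambda>s. \<gamma> s $ k) has_real_derivative T s $ k) (at s)" for k using vd_comp[OF hg] .
    have cT: "((\<lambda>s. T s $ k) has_real_derivative T' $ k) (at s)" for k using vd_comp[OF hT] .
    have feq: "(\<lambda>s. bcv_metric a b (\<gamma> s) (T s) E3) = (\<lambda>s. T s $ 3 + b/2*(\<gamma> s $ 2 * T s $ 1 - \<gamma> s $ 1 * T s $ 2)/bcv_lambda a (\<gamma> s))"
      by (simp add: fun_eq_iff metric_E3 bcv_omega_def)
    have hLam: "((\<lambda>s. bcv_lambda a (\<gamma> s)) has_real_derivative a*(2*\<gamma> s $ 1*T s $ 1 + 2*\<gamma> s $ 2*T s $ 2)) (at s)"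
      unfolding bcv_lambda_def by (rule lam_deriv[OF cg[of 1] cg[of 2]])
    note D = omega_deriv[OF cg[of 1] cg[of 2] cT[of 1] cT[of 2] cT[of 3] hLam Lnz, of b]
    have cov: "bcv_cov a b \<gamma> T s = T' + (\<chi> k. \<Sum>i\<in>UNIV. \<Sum>j\<in>UNIV. bcv_christoffel a b (\<gamma> s) k i j * T s $ i * T s $ j)"
      unfolding bcv_cov_def T_def[OF s, symmetric] T'_def by simp
    have "\<kappa> s * bcv_metric a b (\<gamma> s) (N s) E3 = bcv_omega a b (\<gamma> s) (bcv_cov a b \<gamma> T s)"
      unfolding metric_E3 omega_scale[OF Lnz] frenet1[OF s] ..
    also have "\<dots> = bcv_omega a b (\<gamma> s) T' + a*b*(-(\<gamma> s$1*\<gamma> s$2*(T s$1)^2) + ((\<gamma> s$1)^2 - (\<gamma> s$2)^2)* T s$1 * T s$2 + \<gamma> s$1*\<gamma> s$2*(T s$2)^2)/(bcv_lambda a (\<gamma> s))^2"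
      unfolding cov omega_add[OF Lnz] omega_C[OF Lnz] ..
    finally have K: "\<kappa> s * bcv_metric a b (\<gamma> s) (N s) E3 = bcv_omega a b (\<gamma> s) T' + a*b*(-(\<gamma> s$1*\<gamma> s$2*(T s$1)^2) + ((\<gamma> s$1)^2 - (\<gamma> s$2)^2)* T s$1 * T s$2 + \<gamma> s$1*\<gamma> s$2*(T s$2)^2)/(bcv_lambda a (\<gamma> s))^2" .
    have O: "bcv_omega a b (\<gamma> s) T' = T'$3 + b/2*(\<gamma> s$2 * T'$1 - \<gamma> s$1 * T'$2)/bcv_lambda a (\<gamma> s)"
      unfolding bcv_omega_def ..
    note FA = final_alg[OF Lnz, where w'="T'$3" and b=b and v="T s$2" and u="T s$1" and y="\<gamma> s$2"
        and u'="T'$1" and x="\<gamma> s$1" and v'="T'$2" and a=a]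
    show ?thesis unfolding feq
      apply (rule deriv_eq[OF D])
      unfolding K O by (rule FA)
  qed
  show ?thesis
  proof
    assume "\<exists>c. \<forall>s\<in>I. bcv_metric a b (\<gamma> s) (T s) E3 = c"
    then obtain c where c: "\<And>s. s \<in> I \<Longrightarrow> bcv_metric a b (\<gamma> s) (T s) E3 = c" by blast
    show "\<forall>s\<in>I. bcv_metric a b (\<gamma> s) (N s) E3 = 0"
    proof
      fix s assume s: "s \<in> I"
      have c0: "((\<lambda>s. c) has_real_derivative 0) (at s)" by (rule DERIV_const)
      have "((\<lambda>s. bcv_metric a b (\<gamma> s) (T s) E3) has_real_derivative 0) (at s)"
        using has_field_derivative_transform_within_open[OF c0 I(1) s, of "\<lambda>s. bcv_metric a b (\<gamma> s) (T s) E3"]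
          c by metis
      from DERIV_unique[OF fder[OF s] this]
      have "\<kappa> s * bcv_metric a b (\<gamma> s) (N s) E3 = 0" .
      then show "bcv_metric a b (\<gamma> s) (N s) E3 = 0" using nongeod[OF s] by simp
    qed
  next
    assume h: "\<forall>s\<in>I. bcv_metric a b (\<gamma> s) (N s) E3 = 0"
    have "((\<lambda>s. bcv_metric a b (\<gamma> s) (T s) E3) has_real_derivative 0) (at s within I)" if s: "s \<in> I" for s
    proof -
      have z: "\<kappa> s * bcv_metric a b (\<gamma> s) (N s) E3 = 0" using h s by simp
      have "((\<lambda>s. bcv_metric a b (\<gamma> s) (T s) E3) has_real_derivative 0) (at s)"
        using fder[OF s] unfolding z .
      then show ?thesis by (rule has_field_derivative_at_within)
    qed
    then have "\<exists>c. \<forall>s\<in>I. (\<lambda>s. bcv_metric a b (\<gamma> s) (T s) E3) s = c"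
      by (rule has_field_derivative_zero_constant[OF is_interval_convex[OF I(2)]])
    then show "\<exists>c. \<forall>s\<in>I. bcv_metric a b (\<gamma> s) (T s) E3 = c" by simp
  qed
qed

end
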